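(* Let $\Gamma=\langle x,y,z\mid xy^{-1}=zx^{-1},\ yz^{-1}=zy^{-1}\rangle$ with generating set $\Delta=\{x,y,z\}$. Then $W=W_xU_x+W_yU_y+W_zU_z$ is a homogeneous scalar quantum walk on $C_\Delta(\Gamma)$ if and only if, up to a global phase, $W_x=\cos\phi$, $W_y=\frac{1+i(-1)^q}{2}\sin\phi$, $W_z=-\frac{1-i(-1)^q}{2}\sin\phi$ for some real $\phi$ and some integer $q$ (with these values nonzero). In particular such a walk exists.
   Context: The Cayley graph $C_\Delta(\Gamma)$ has vertex set $\Gamma$ and directed edges $(g,g\delta)$, $g\in\Gamma,\delta\in\Delta$. Let $\ell^2(\Gamma)$ have orthonormal basis $\{|g\rangle\}_{g\in\Gamma}$ and for $\delta\in\Gamma$ let $U_\delta|g\rangle=|g\delta\rangle$. A homogeneous scalar quantum walk on $C_\Delta(\Gamma)$ is a unitary operator $W=\sum_{\delta\in\Delta}W_\delta U_\delta$ with all complex coefficients $W_\delta$ nonzero. "Up to a global phase" means that all coefficients may be multiplied by a common complex number of modulus one. *)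

theory Defs
  imports "HOL-Analysis.Analysis" "HOL-Algebra.Group"
begin

datatype gen = GX | GY | GZ

text \<open>Letters of words in the free group: (a, False) is a, (a, True) is a inverse.\<close>
type_synonym letter = "gen \<times> bool"

definition flip_letter :: "letter \<Rightarrow> letter" where
  "flip_letter l = (fst l, \<not> snd l)"

definition eval_letter :: "('a, 'b) monoid_scheme \<Rightarrow> (gen \<Rightarrow> 'a) \<Rightarrow> letter \<Rightarrow> 'a" where
  "eval_letter G v l = (if snd l then inv\<^bsub>G\<^esub> (v (fst l)) else v (fst l))"

definition eval_word :: "('a, 'b) monoid_scheme \<Rightarrow> (gen \<Rightarrow> 'a) \<Rightarrow> letter list \<Rightarrow> 'a" where
  "eval_word G v w = foldr (\<lambda>l acc. eval_letter G v l \<otimes>\<^bsub>G\<^esub> acc) w \<one>\<^bsub>G\<^esub>"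

text \<open>Relators of Gamma: x y^-1 = z x^-1 gives x y^-1 x z^-1, and y z^-1 = z y^-1 gives y z^-1 y z^-1.\<close>
definition relators :: "letter list set" where
  "relators = {[(GX,False),(GY,True),(GX,False),(GZ,True)],
               [(GY,False),(GZ,True),(GY,False),(GZ,True)]}"

inductive red_step :: "letter list \<Rightarrow> letter list \<Rightarrow> bool" where
  cancel: "red_step (u @ [l, flip_letter l] @ w) (u @ w)"
| rel: "r \<in> relators \<Longrightarrow> red_step (u @ r @ w) (u @ w)"

definition word_equiv :: "letter list \<Rightarrow> letter list \<Rightarrow> bool" where
  "word_equiv = (sup red_step red_step\<inverse>\<inverse>)\<^sup>*\<^sup>*"

definition presents :: "('a, 'b) monoid_scheme \<Rightarrow> (gen \<Rightarrow> 'a) \<Rightarrow> bool" where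
  "presents G v \<longleftrightarrow> group G \<and> (\<forall>a. v a \<in> carrier G)
     \<and> carrier G = range (eval_word G v)
     \<and> (\<forall>w w'. eval_word G v w = eval_word G v w' \<longleftrightarrow> word_equiv w w')"

definition in_l2 :: "('a, 'b) monoid_scheme \<Rightarrow> ('a \<Rightarrow> complex) \<Rightarrow> bool" where
  "in_l2 G f \<longleftrightarrow> (\<forall>h. h \<notin> carrier G \<longrightarrow> f h = 0)
     \<and> (\<lambda>h. (cmod (f h))\<^sup>2) summable_on carrier G"

definition l2_norm :: "('a, 'b) monoid_scheme \<Rightarrow> ('a \<Rightarrow> complex) \<Rightarrow> real" where
  "l2_norm G f = sqrt (infsum (\<lambda>h. (cmod (f h))\<^sup>2) (carrier G))"

text \<open>U_d |g> = |g d>, i.e. (U_d f)(h) = f(h d^-1).\<close>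
definition shift_op :: "('a, 'b) monoid_scheme \<Rightarrow> 'a \<Rightarrow> ('a \<Rightarrow> complex) \<Rightarrow> ('a \<Rightarrow> complex)" where
  "shift_op G d f = (\<lambda>h. if h \<in> carrier G then f (h \<otimes>\<^bsub>G\<^esub> inv\<^bsub>G\<^esub> d) else 0)"

definition walk_op :: "('a, 'b) monoid_scheme \<Rightarrow> (gen \<Rightarrow> 'a) \<Rightarrow> (gen \<Rightarrow> complex)
    \<Rightarrow> ('a \<Rightarrow> complex) \<Rightarrow> ('a \<Rightarrow> complex)" where
  "walk_op G v c f = (\<lambda>h. c GX * shift_op G (v GX) f h + c GY * shift_op G (v GY) f h
                           + c GZ * shift_op G (v GZ) f h)"

text \<open>Unitary operator on ell^2: a norm-preserving map of ell^2 onto ell^2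
  (the operator is linear by construction).\<close>
definition unitary_l2 :: "('a, 'b) monoid_scheme \<Rightarrow> (('a \<Rightarrow> complex) \<Rightarrow> ('a \<Rightarrow> complex)) \<Rightarrow> bool" where
  "unitary_l2 G T \<longleftrightarrow> (\<forall>f. in_l2 G f \<longrightarrow> in_l2 G (T f) \<and> l2_norm G (T f) = l2_norm G f)
     \<and> (\<forall>g. in_l2 G g \<longrightarrow> (\<exists>f. in_l2 G f \<and> T f = g))"

definition homog_scalar_qw :: "('a, 'b) monoid_scheme \<Rightarrow> (gen \<Rightarrow> 'a) \<Rightarrow> (gen \<Rightarrow> complex) \<Rightarrow> bool" where
  "homog_scalar_qw G v c \<longleftrightarrow> (\<forall>d. c d \<noteq> 0) \<and> unitary_l2 G (walk_op G v c)"

end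

theory Submission
  imports Defs
begin

fun gval :: "gen \<Rightarrow> int" where
  "gval GX = 1" | "gval GY = 2" | "gval GZ = 0"

definition lw :: "letter \<Rightarrow> int" where
  "lw l = (if snd l then - gval (fst l) else gval (fst l))"

definition wt :: "letter list \<Rightarrow> int" where
  "wt w = sum_list (map lw w)"

lemma wt_append[simp]: "wt (u @ w) = wt u + wt w"
  by (simp add: wt_def)

lemma red_step_wt: "red_step a b \<Longrightarrow> wt a mod 4 = wt b mod 4"
proof (induction rule: red_step.induct)
  case (cancel u l w)
  have "lw l + lw (flip_letter l) = 0" by (simp add: lw_def flip_letter_def)
  then show ?case by (simp add: wt_def add.assoc[symmetric])
next
  case (rel r u w)
  then have "wt r mod 4 = 0" by (auto simp: relators_def wt_def lw_def)
  then obtain k where k: "wt r = 4 * k" by auto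
  have e: "wt (u @ r @ w) = wt (u @ w) + k * 4" using k by simp
  show ?case by (simp only: e mod_mult_self1)
qed

lemma word_equiv_wt: "word_equiv a b \<Longrightarrow> wt a mod 4 = wt b mod 4"
  unfolding word_equiv_def
proof (induction rule: rtranclp_induct)
  case base then show ?case by simp
next
  case (step y z)
  then show ?case using red_step_wt by auto
qed

lemma UNIV_gen: "(UNIV :: gen set) = {GX, GY, GZ}"
  using gen.exhaust by auto

locale pres = group G for G :: "('a, 'b) monoid_scheme" (structure) +
  fixes v :: "gen \<Rightarrow> 'a"
  assumes pr: "presents G v"
begin

abbreviation "X \<equiv> v GX"
abbreviation "Y \<equiv> v GY"
abbreviation "Z \<equiv> v GZ"

lemma vc[simp]: "v d \<in> carrier G"
  using pr unfolding presents_def by blast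

lemma ew_neq: "wt w mod 4 \<noteq> wt w' mod 4 \<Longrightarrow> eval_word G v w \<noteq> eval_word G v w'"
  using pr word_equiv_wt unfolding presents_def by blast

lemma ew_rel: "r \<in> relators \<Longrightarrow> eval_word G v r = \<one>"
proof -
  assume r: "r \<in> relators"
  have "red_step ([] @ r @ []) ([] @ [])" by (rule red_step.rel[OF r])
  then have "word_equiv r []" unfolding word_equiv_def by auto
  then have "eval_word G v r = eval_word G v []" using pr unfolding presents_def by blast
  then show ?thesis by (simp add: eval_word_def)
qed

lemma rel1: "X \<otimes> inv Y \<otimes> X \<otimes> inv Z = \<one>"
proof -
  have "eval_word G v [(GX,False),(GY,True),(GX,False),(GZ,True)] = \<one>"
    by (rule ew_rel) (simp add: relators_def)
  then show ?thesis by (simp add: eval_word_def eval_letter_def m_assoc)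
qed

lemma rel2: "Y \<otimes> inv Z \<otimes> Y \<otimes> inv Z = \<one>"
proof -
  have "eval_word G v [(GY,False),(GZ,True),(GY,False),(GZ,True)] = \<one>"
    by (rule ew_rel) (simp add: relators_def)
  then show ?thesis by (simp add: eval_word_def eval_letter_def m_assoc)
qed

lemma pq1: "p \<in> carrier G \<Longrightarrow> q \<in> carrier G \<Longrightarrow> p \<otimes> q = \<one> \<Longrightarrow> p = inv q \<and> q = inv p"
  by (metis inv_comm inv_equality)

lemma rot: assumes "a \<in> carrier G" "b \<in> carrier G" "c \<in> carrier G" "d \<in> carrier G"
  and "a \<otimes> b \<otimes> c \<otimes> d = \<one>" shows "b \<otimes> c \<otimes> d \<otimes> a = \<one>"
proof -
  have "b \<otimes> c \<otimes> d \<otimes> a = inv a \<otimes> (a \<otimes> b \<otimes> c \<otimes> d) \<otimes> a"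
    using assms(1-4) by (simp add: m_assoc[symmetric])
  also have "\<dots> = \<one>" using assms by simp
  finally show ?thesis .
qed

definition "ea \<equiv> X \<otimes> inv Y"
definition "eb \<equiv> Y \<otimes> inv X"
definition "ee \<equiv> Y \<otimes> inv Z"

lemma abe_closed[simp]: "ea \<in> carrier G" "eb \<in> carrier G" "ee \<in> carrier G"
  by (simp_all add: ea_def eb_def ee_def)

lemma ZX: "Z \<otimes> inv X = ea" and XZ: "X \<otimes> inv Z = eb"
proof -
  have "(X \<otimes> inv Y) \<otimes> (X \<otimes> inv Z) = \<one>" using rel1 by (simp add: m_assoc)
  then have h: "X \<otimes> inv Y = inv (X \<otimes> inv Z) \<and> X \<otimes> inv Z = inv (X \<otimes> inv Y)"
    by (intro pq1) simp_all
  then show "Z \<otimes> inv X = ea" by (simp add: ea_def inv_mult_group)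
  show "X \<otimes> inv Z = eb" using h by (simp add: eb_def inv_mult_group)
qed

lemma ZY: "Z \<otimes> inv Y = ee"
proof -
  have "(Y \<otimes> inv Z) \<otimes> (Y \<otimes> inv Z) = \<one>" using rel2 by (simp add: m_assoc)
  then have h: "Y \<otimes> inv Z = inv (Y \<otimes> inv Z)"
    using pq1 by simp
  then show ?thesis by (simp add: ee_def inv_mult_group)
qed

lemma ee_sq: "ee \<otimes> ee = \<one>"
  using rel2 by (simp add: ee_def m_assoc)

lemma ab: "ea \<otimes> eb = \<one>"
  by (simp add: ea_def eb_def m_assoc[symmetric]) (simp add: m_assoc)

lemma iZX: "inv Z \<otimes> X = inv X \<otimes> Y" and iXZ: "inv X \<otimes> Z = inv Y \<otimes> X"
proof -
  have "inv Y \<otimes> X \<otimes> inv Z \<otimes> X = \<one>" by (rule rot) (simp_all add: rel1)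
  then have "(inv Y \<otimes> X) \<otimes> (inv Z \<otimes> X) = \<one>" by (simp add: m_assoc)
  then have h: "inv Y \<otimes> X = inv (inv Z \<otimes> X) \<and> inv Z \<otimes> X = inv (inv Y \<otimes> X)"
    by (intro pq1) simp_all
  then show "inv Z \<otimes> X = inv X \<otimes> Y" by (simp add: inv_mult_group)
  show "inv X \<otimes> Z = inv Y \<otimes> X" using h by (simp add: inv_mult_group)
qed

lemma iZY: "inv Z \<otimes> Y = inv Y \<otimes> Z"
proof -
  have "inv Z \<otimes> Y \<otimes> inv Z \<otimes> Y = \<one>" by (rule rot) (simp_all add: rel2)
  then have "(inv Z \<otimes> Y) \<otimes> (inv Z \<otimes> Y) = \<one>" by (simp add: m_assoc)
  then have h: "inv Z \<otimes> Y = inv (inv Z \<otimes> Y)" using pq1 by simp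
  then show ?thesis by (simp add: inv_mult_group)
qed

lemma ew1: "eval_word G v [] = \<one>" by (simp add: eval_word_def)
lemma ewa: "ea = eval_word G v [(GX,False),(GY,True)]" by (simp add: eval_word_def eval_letter_def ea_def)
lemma ewb: "eb = eval_word G v [(GY,False),(GX,True)]" by (simp add: eval_word_def eval_letter_def eb_def)
lemma ewe: "ee = eval_word G v [(GY,False),(GZ,True)]" by (simp add: eval_word_def eval_letter_def ee_def)
lemma ewaa: "ea \<otimes> ea = eval_word G v [(GX,False),(GY,True),(GX,False),(GY,True)]"
  by (simp add: eval_word_def eval_letter_def ea_def m_assoc)
lemma ewae: "ea \<otimes> ee = eval_word G v [(GX,False),(GY,True),(GY,False),(GZ,True)]"
  by (simp add: eval_word_def eval_letter_def ea_def ee_def m_assoc)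
lemma ewea: "ee \<otimes> ea = eval_word G v [(GY,False),(GZ,True),(GX,False),(GY,True)]"
  by (simp add: eval_word_def eval_letter_def ea_def ee_def m_assoc)
lemma eweb: "ee \<otimes> eb = eval_word G v [(GY,False),(GZ,True),(GY,False),(GX,True)]"
  by (simp add: eval_word_def eval_letter_def eb_def ee_def m_assoc)

lemmas ewall = ew1[symmetric] ewa ewb ewe ewaa ewae ewea eweb

lemma neqs: "ea \<noteq> \<one>" "eb \<noteq> \<one>" "ee \<noteq> \<one>" "ea \<otimes> ea \<noteq> \<one>" "ea \<otimes> ea \<noteq> ea"
  "eb \<noteq> ea" "ee \<noteq> ea" "ea \<otimes> ee \<noteq> \<one>" "ea \<otimes> ee \<noteq> ea" "ee \<otimes> ea \<noteq> \<one>" "ee \<otimes> ea \<noteq> ee"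
  "eb \<noteq> ee" "ee \<otimes> eb \<noteq> \<one>" "ee \<otimes> eb \<noteq> ee"
  by ((unfold ewaa ewae ewea eweb)?, (unfold ewa ewb ewe ew1[symmetric])?, rule ew_neq, simp add: wt_def lw_def)+

end

lemma has_sum_sum_fin:
  fixes f :: "'i \<Rightarrow> 'a \<Rightarrow> complex"
  assumes "finite I" "\<And>i. i \<in> I \<Longrightarrow> (f i has_sum s i) A"
  shows "((\<lambda>x. \<Sum>i\<in>I. f i x) has_sum (\<Sum>i\<in>I. s i)) A"
  using assms
proof (induction I rule: finite_induct)
  case empty then show ?case by simp
next
  case (insert i I)
  then show ?case by (simp add: has_sum_add)
qed

lemma prod_summ:
  fixes F H :: "'a \<Rightarrow> complex"
  assumes "(\<lambda>h. (cmod (F h))\<^sup>2) summable_on A" "(\<lambda>h. (cmod (H h))\<^sup>2) summable_on A"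
  shows "(\<lambda>h. F h * cnj (H h)) summable_on A"
proof -
  have "(\<lambda>h. norm (F h * cnj (H h))) summable_on A"
  proof (rule summable_on_comparison_test[OF summable_on_add[OF assms]])
    fix x
    have h1: "0 \<le> (cmod (F x) - cmod (H x))\<^sup>2" by simp
    have h2: "0 \<le> cmod (F x) * cmod (H x)" by simp
    have "cmod (F x) * cmod (H x) \<le> (cmod (F x))\<^sup>2 + (cmod (H x))\<^sup>2"
      using h1 h2 unfolding power2_diff by linarith
    then show "norm (F x * cnj (H x)) \<le> (cmod (F x))\<^sup>2 + (cmod (H x))\<^sup>2"
      by (simp add: norm_mult)
  qed simp
  then show ?thesis using summable_on_iff_abs_summable_on_complex by blast
qed

definition ipP :: "('a, 'b) monoid_scheme \<Rightarrow> ('a \<Rightarrow> complex) \<Rightarrow> 'a \<Rightarrow> complex" where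
  "ipP G f g = infsum (\<lambda>k. f k * cnj (f (k \<otimes>\<^bsub>G\<^esub> g))) (carrier G)"

context group begin

lemma bij_rmult: "a \<in> carrier G \<Longrightarrow> bij_betw (\<lambda>h. h \<otimes> a) (carrier G) (carrier G)"
  unfolding bij_betw_def
proof
  assume a: "a \<in> carrier G"
  show "inj_on (\<lambda>h. h \<otimes> a) (carrier G)" using a by (auto intro!: inj_onI)
  show "(\<lambda>h. h \<otimes> a) ` carrier G = carrier G"
  proof
    show "(\<lambda>h. h \<otimes> a) ` carrier G \<subseteq> carrier G" using a by auto
    show "carrier G \<subseteq> (\<lambda>h. h \<otimes> a) ` carrier G"
    proof
      fix x assume x: "x \<in> carrier G"
      then have "x = (x \<otimes> inv a) \<otimes> a" using a by (simp add: m_assoc)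
      then show "x \<in> (\<lambda>h. h \<otimes> a) ` carrier G" using a x by blast
    qed
  qed
qed

lemma shift_sq:
  assumes "a \<in> carrier G" "(\<lambda>h. (cmod (f h))\<^sup>2) summable_on carrier G"
  shows "(\<lambda>h. (cmod (f (h \<otimes> a)))\<^sup>2) summable_on carrier G"
  using summable_on_reindex_bij_betw[OF bij_rmult[OF assms(1)], of "\<lambda>h. (cmod (f h))\<^sup>2"] assms(2)
  by simp

lemma pair_has_sum:
  assumes "a \<in> carrier G" "b \<in> carrier G" "(\<lambda>h. (cmod (f h))\<^sup>2) summable_on carrier G"
  shows "((\<lambda>h. f (h \<otimes> a) * cnj (f (h \<otimes> b))) has_sum ipP G f (inv a \<otimes> b)) (carrier G)"
proof -
  let ?F = "\<lambda>k. f k * cnj (f (k \<otimes> (inv a \<otimes> b)))"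
  have "?F summable_on carrier G"
    by (rule prod_summ[OF assms(3) shift_sq]) (use assms in auto)
  then have "(?F has_sum ipP G f (inv a \<otimes> b)) (carrier G)"
    by (simp add: ipP_def)
  then have "((\<lambda>h. ?F (h \<otimes> a)) has_sum ipP G f (inv a \<otimes> b)) (carrier G)"
    using has_sum_reindex_bij_betw[OF bij_rmult[OF assms(1)], of ?F] by simp
  moreover have "?F (h \<otimes> a) = f (h \<otimes> a) * cnj (f (h \<otimes> b))" if "h \<in> carrier G" for h
  proof -
    have "h \<otimes> a \<otimes> (inv a \<otimes> b) = h \<otimes> b" using assms that by (simp add: m_assoc[symmetric]) (simp add: m_assoc)
    then show ?thesis by simp
  qed
  ultimately show ?thesis using has_sum_cong by (smt (verit))
qed

lemma quad:
  fixes f :: "'a \<Rightarrow> complex" and \<alpha> :: "'i \<Rightarrow> complex"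
  assumes I: "finite I" and s: "\<And>i. i \<in> I \<Longrightarrow> s i \<in> carrier G"
    and f: "(\<lambda>h. (cmod (f h))\<^sup>2) summable_on carrier G"
  shows "((\<lambda>h. (cmod (\<Sum>i\<in>I. \<alpha> i * f (h \<otimes> s i)))\<^sup>2) has_sum
     Re (\<Sum>i\<in>I. \<Sum>j\<in>I. \<alpha> i * cnj (\<alpha> j) * ipP G f (inv (s i) \<otimes> s j))) (carrier G)"
proof -
  let ?Q = "\<Sum>i\<in>I. \<Sum>j\<in>I. \<alpha> i * cnj (\<alpha> j) * ipP G f (inv (s i) \<otimes> s j)"
  have "((\<lambda>h. \<Sum>i\<in>I. \<Sum>j\<in>I. \<alpha> i * cnj (\<alpha> j) * (f (h \<otimes> s i) * cnj (f (h \<otimes> s j)))) has_sum ?Q) (carrier G)"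
    using I s f by (intro has_sum_sum_fin has_sum_cmult_right pair_has_sum) auto
  moreover have "(\<Sum>i\<in>I. \<Sum>j\<in>I. \<alpha> i * cnj (\<alpha> j) * (f (h \<otimes> s i) * cnj (f (h \<otimes> s j))))
      = complex_of_real ((cmod (\<Sum>i\<in>I. \<alpha> i * f (h \<otimes> s i)))\<^sup>2)" for h
    unfolding complex_norm_square cnj_sum sum_distrib_right sum_distrib_left
    apply (simp add: algebra_simps) by (rule sum.swap)
  ultimately have "((\<lambda>h. complex_of_real ((cmod (\<Sum>i\<in>I. \<alpha> i * f (h \<otimes> s i)))\<^sup>2)) has_sum ?Q) (carrier G)"
    by simp
  from has_sum_Re[OF this] show ?thesis by simp
qed

end

lemma fin_support:
  assumes "finite F" "F \<subseteq> A" "\<And>x. x \<in> A \<Longrightarrow> x \<notin> F \<Longrightarrow> \<phi> x = 0"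
  shows "infsum \<phi> A = sum \<phi> F" "\<phi> summable_on A"
proof -
  show "infsum \<phi> A = sum \<phi> F"
    using infsum_cong_neutral[of F A \<phi> \<phi>] assms by (auto)
  have "\<phi> summable_on F" using assms(1) by simp
  then show "\<phi> summable_on A"
    using summable_on_cong_neutral[of F A \<phi> \<phi>] assms by auto
qed

context pres begin

definition "cA c = c GX * cnj (c GX) + c GY * cnj (c GY) + c GZ * cnj (c GZ)"
definition "cB c = c GX * cnj (c GY) + c GZ * cnj (c GX)"
definition "cB' c = c GY * cnj (c GX) + c GX * cnj (c GZ)"
definition "cD c = c GY * cnj (c GZ) + c GZ * cnj (c GY)"

lemma walk_sum: "walk_op G v c f h = (if h \<in> carrier G then (\<Sum>i\<in>UNIV. c i * f (h \<otimes> inv (v i))) else 0)"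
  by (simp add: walk_op_def shift_op_def UNIV_gen)

definition "Qe c f = cA c * ipP G f \<one> + cB c * ipP G f ea + cB' c * ipP G f eb + cD c * ipP G f ee"

lemma walk_has_sum:
  assumes "(\<lambda>h. (cmod (f h))\<^sup>2) summable_on carrier G"
  shows "((\<lambda>h. (cmod (walk_op G v c f h))\<^sup>2) has_sum Re (Qe c f)) (carrier G)"
proof -
  have q: "((\<lambda>h. (cmod (\<Sum>i\<in>UNIV. c i * f (h \<otimes> inv (v i))))\<^sup>2) has_sum
     Re (\<Sum>i\<in>UNIV. \<Sum>j\<in>UNIV. c i * cnj (c j) * ipP G f (inv (inv (v i)) \<otimes> inv (v j)))) (carrier G)"
    by (rule quad) (use assms in \<open>auto simp: UNIV_gen\<close>)
  have e: "(\<Sum>i\<in>UNIV. \<Sum>j\<in>UNIV. c i * cnj (c j) * ipP G f (inv (inv (v i)) \<otimes> inv (v j))) = Qe c f"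
    by (simp add: UNIV_gen Qe_def cA_def cB_def cB'_def cD_def ZX XZ ZY
        ea_def[symmetric] eb_def[symmetric] ee_def[symmetric] algebra_simps)
  show ?thesis using q unfolding e by (subst has_sum_cong[where g="\<lambda>h. (cmod (\<Sum>i\<in>UNIV. c i * f (h \<otimes> inv (v i))))\<^sup>2"]) (auto simp: walk_sum)
qed

lemma P1:
  assumes "(\<lambda>h. (cmod (f h))\<^sup>2) summable_on carrier G"
  shows "ipP G f \<one> = complex_of_real (infsum (\<lambda>h. (cmod (f h))\<^sup>2) (carrier G))"
proof -
  have "ipP G f \<one> = infsum (\<lambda>h. complex_of_real ((cmod (f h))\<^sup>2)) (carrier G)"
    unfolding ipP_def complex_norm_square by (rule infsum_cong) simp
  also have "\<dots> = complex_of_real (infsum (\<lambda>h. (cmod (f h))\<^sup>2) (carrier G))"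
    by (rule infsumI, rule has_sum_of_real, rule has_sum_infsum, rule assms)
  finally show ?thesis .
qed

lemma walk_l2:
  assumes "in_l2 G f"
  shows "in_l2 G (walk_op G v c f)"
    "l2_norm G (walk_op G v c f) = sqrt (Re (Qe c f))"
    "l2_norm G f = sqrt (Re (ipP G f \<one>))"
proof -
  have s: "(\<lambda>h. (cmod (f h))\<^sup>2) summable_on carrier G" using assms by (simp add: in_l2_def)
  note hs = walk_has_sum[OF s, of c]
  show "in_l2 G (walk_op G v c f)" unfolding in_l2_def
    using hs by (auto simp: walk_sum summable_on_def)
  show "l2_norm G (walk_op G v c f) = sqrt (Re (Qe c f))"
    unfolding l2_norm_def using infsumI[OF hs] by simp
  show "l2_norm G f = sqrt (Re (ipP G f \<one>))"
    unfolding l2_norm_def P1[OF s] by simp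
qed

definition ft :: "complex \<Rightarrow> 'a \<Rightarrow> 'a \<Rightarrow> complex" where
  "ft t g = (\<lambda>h. if h = \<one> then 1 else if h = g then t else 0)"

lemma ft_l2: "g \<in> carrier G \<Longrightarrow> in_l2 G (ft t g)"
  unfolding in_l2_def
proof
  assume g: "g \<in> carrier G"
  show "\<forall>h. h \<notin> carrier G \<longrightarrow> ft t g h = 0" using g by (auto simp: ft_def)
  show "(\<lambda>h. (cmod (ft t g h))\<^sup>2) summable_on carrier G"
    by (rule fin_support(2)[of "{\<one>, g}"]) (use g in \<open>auto simp: ft_def\<close>)
qed

lemma ft_P:
  assumes g: "g \<in> carrier G" "g \<noteq> \<one>" and h: "h \<in> carrier G"
  shows "ipP G (ft t g) h = cnj (ft t g h) + t * cnj (ft t g (g \<otimes> h))"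
proof -
  have "ipP G (ft t g) h = (\<Sum>k\<in>{\<one>, g}. ft t g k * cnj (ft t g (k \<otimes> h)))"
    unfolding ipP_def
    by (rule fin_support(1)) (use g in \<open>auto simp: ft_def\<close>)
  also have "\<dots> = cnj (ft t g h) + t * cnj (ft t g (g \<otimes> h))"
    using g h by (simp add: ft_def)
  finally show ?thesis .
qed

lemmas nq = neqs neqs[THEN not_sym]

lemma iso_cond:
  assumes iso: "\<And>f. in_l2 G f \<Longrightarrow> l2_norm G (walk_op G v c f) = l2_norm G f"
  shows "cA c = 1 \<and> cB c = 0 \<and> Re (c GY * cnj (c GZ)) = 0"
proof -
  have key: "Re (Qe c f) = Re (ipP G f \<one>)" if "in_l2 G f" for f
    using iso[OF that] walk_l2(2,3)[OF that] by simp
  have imA: "Im (cA c) = 0" by (simp add: cA_def)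
  have "Re (Qe c (ft 0 ea)) = Re (ipP G (ft 0 ea) \<one>)" by (rule key, rule ft_l2) simp
  then have "Re (cA c) = 1"
    by (simp add: Qe_def ft_P nq) (simp add: ft_def nq)
  then have A: "cA c = 1" using imA by (simp add: complex_eq_iff)
  have T2: "Re (cB c * cnj t + cB' c * t) = 0" for t
  proof -
    have "Re (Qe c (ft t ea)) = Re (ipP G (ft t ea) \<one>)" by (rule key, rule ft_l2) simp
    then show ?thesis
      by (simp add: Qe_def ft_P nq) (simp add: ft_def nq ab A algebra_simps)
  qed
  have B': "cB' c = cnj (cB c)" by (simp add: cB_def cB'_def algebra_simps)
  have "Re (cB c) = 0" using T2[of 1] B' by simp
  moreover have "Im (cB c) = 0" using T2[of \<i>] B' by simp
  ultimately have B: "cB c = 0" by (simp add: complex_eq_iff)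
  have "Re (Qe c (ft 1 ee)) = Re (ipP G (ft 1 ee) \<one>)" by (rule key, rule ft_l2) simp
  then have "Re (cD c) = 0"
    by (simp add: Qe_def ft_P nq) (simp add: ft_def nq A B B' ee_sq)
  then have "Re (c GY * cnj (c GZ)) = 0" by (simp add: cD_def)
  with A B show ?thesis by simp
qed

lemma cond_unitary:
  assumes A: "cA c = 1" and B: "cB c = 0" and D: "Re (c GY * cnj (c GZ)) = 0"
  shows "unitary_l2 G (walk_op G v c)"
proof -
  have B': "cB' c = 0" using B by (simp add: cB_def cB'_def) (metis complex_cnj_add complex_cnj_mult complex_cnj_zero complex_cnj_cnj add.commute mult.commute)
  have D': "cD c = 0"
  proof -
    have "cD c = c GY * cnj (c GZ) + cnj (c GY * cnj (c GZ))" by (simp add: cD_def mult.commute)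
    then show ?thesis using D by (simp add: complex_eq_iff)
  qed
  have Q: "Qe c f = ipP G f \<one>" for f by (simp add: Qe_def A B B' D')
  show ?thesis unfolding unitary_l2_def
  proof (intro conjI allI impI)
    fix f assume f: "in_l2 G f"
    show "in_l2 G (walk_op G v c f)" by (rule walk_l2(1)[OF f])
    show "l2_norm G (walk_op G v c f) = l2_norm G f" using walk_l2(2,3)[OF f] Q by simp
  next
    fix g assume g: "in_l2 G g"
    define f where "f = (\<lambda>h. if h \<in> carrier G then (\<Sum>j\<in>UNIV. cnj (c j) * g (h \<otimes> v j)) else 0)"
    have gs: "(\<lambda>h. (cmod (g h))\<^sup>2) summable_on carrier G" using g by (simp add: in_l2_def)
    have "((\<lambda>h. (cmod (\<Sum>j\<in>UNIV. cnj (c j) * g (h \<otimes> v j)))\<^sup>2) has_sum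
       Re (\<Sum>i\<in>UNIV. \<Sum>j\<in>UNIV. cnj (c i) * cnj (cnj (c j)) * ipP G g (inv (v i) \<otimes> v j))) (carrier G)"
      by (rule quad) (use gs in \<open>auto simp: UNIV_gen\<close>)
    then have "(\<lambda>h. (cmod (\<Sum>j\<in>UNIV. cnj (c j) * g (h \<otimes> v j)))\<^sup>2) summable_on carrier G"
      using summable_on_def by blast
    then have "(\<lambda>h. (cmod (f h))\<^sup>2) summable_on carrier G"
      by (rule summable_on_cong[THEN iffD1, rotated]) (simp add: f_def)
    then have fl: "in_l2 G f" unfolding in_l2_def f_def by simp
    have "walk_op G v c f = g"
    proof
      fix h
      show "walk_op G v c f h = g h"
      proof (cases "h \<in> carrier G")
        case False
        then show ?thesis using g by (simp add: walk_sum in_l2_def)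
      next
        case h: True
        have "walk_op G v c f h = (\<Sum>i\<in>UNIV. c i * (\<Sum>j\<in>UNIV. cnj (c j) * g (h \<otimes> (inv (v i) \<otimes> v j))))"
          using h by (simp add: walk_sum f_def m_assoc)
        also have "\<dots> = cA c * g h + cB c * g (h \<otimes> (inv X \<otimes> Y)) + cB' c * g (h \<otimes> (inv Y \<otimes> X))
            + cD c * g (h \<otimes> (inv Y \<otimes> Z))"
          using h by (simp add: UNIV_gen iZX iXZ iZY cA_def cB_def cB'_def cD_def algebra_simps)
        also have "\<dots> = g h" by (simp add: A B B' D')
        finally show ?thesis .
      qed
    qed
    then show "\<exists>f. in_l2 G f \<and> walk_op G v c f = g" using fl by blast
  qed
qed

lemma homog_iff: "homog_scalar_qw G v c \<longleftrightarrow>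
   (\<forall>d. c d \<noteq> 0) \<and> cA c = 1 \<and> cB c = 0 \<and> Re (c GY * cnj (c GZ)) = 0"
  unfolding homog_scalar_qw_def
  using iso_cond cond_unitary unfolding unitary_l2_def by blast

end

lemma pm1: "(-1::complex) powi q = 1 \<or> (-1::complex) powi q = -1"
  by (cases "even q") simp_all

lemma sc: "\<omega> * cnj \<omega> = 1 \<Longrightarrow> (\<omega> * a) * cnj (\<omega> * b) = a * cnj b"
proof -
  assume h: "\<omega> * cnj \<omega> = 1"
  have "(\<omega> * a) * cnj (\<omega> * b) = (\<omega> * cnj \<omega>) * (a * cnj b)" by (simp add: ac_simps)
  then show ?thesis using h by simp
qed

lemma param_back:
  fixes \<phi> :: real and s :: complex
  assumes s: "s = 1 \<or> s = -1"
  defines "a \<equiv> complex_of_real (cos \<phi>)"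
    and "b \<equiv> (1 + \<i> * s) / 2 * complex_of_real (sin \<phi>)"
    and "c \<equiv> - ((1 - \<i> * s) / 2) * complex_of_real (sin \<phi>)"
  shows "a * cnj a + b * cnj b + c * cnj c = 1 \<and> a * cnj b + c * cnj a = 0 \<and> Re (b * cnj c) = 0"
proof -
  have sc1: "(sin \<phi>)\<^sup>2 + (cos \<phi>)\<^sup>2 = 1" by simp
  from s show ?thesis
  proof
    assume "s = 1"
    then show ?thesis unfolding a_def b_def c_def
      by (simp add: complex_eq_iff algebra_simps power2_eq_square[symmetric] sc1)
  next
    assume "s = -1"
    then show ?thesis unfolding a_def b_def c_def
      by (simp add: complex_eq_iff algebra_simps power2_eq_square[symmetric] sc1)
  qed
qed

lemma param_fwd:
  fixes x y z :: complex
  assumes x0: "x \<noteq> 0" and A: "x * cnj x + y * cnj y + z * cnj z = 1"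
    and B: "x * cnj y + z * cnj x = 0" and D: "Re (y * cnj z) = 0"
  shows "\<exists>\<omega> (\<phi>::real) (q::int). cmod \<omega> = 1 \<and>
                x = \<omega> * complex_of_real (cos \<phi>) \<and>
                y = \<omega> * ((1 + \<i> * (-1) powi q) / 2 * complex_of_real (sin \<phi>)) \<and>
                z = \<omega> * (- ((1 - \<i> * (-1) powi q) / 2) * complex_of_real (sin \<phi>))"
proof -
  define r where "r = cmod x"
  have r0: "r > 0" using x0 by (simp add: r_def)
  define \<omega> where "\<omega> = x / complex_of_real r"
  have om: "cmod \<omega> = 1" using r0 by (simp add: \<omega>_def r_def norm_divide)
  have oc: "\<omega> * cnj \<omega> = 1" using complex_norm_square[of \<omega>] om by simp
  define u where "u = y * cnj \<omega>"
  define w where "w = z * cnj \<omega>"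
  have xr: "x = \<omega> * complex_of_real r" using r0 by (simp add: \<omega>_def)
  have yu: "y = \<omega> * u" unfolding u_def using oc by (metis mult.assoc mult.commute mult_1)
  have zw: "z = \<omega> * w" unfolding w_def using oc by (metis mult.assoc mult.commute mult_1)
  have "complex_of_real r * cnj u + w * complex_of_real r = 0"
    using B unfolding xr yu zw sc[OF oc] by simp
  then have "complex_of_real r * (cnj u + w) = 0" by (simp add: algebra_simps)
  then have wu: "w = - cnj u" using r0 by (simp add: add_eq_0_iff)
  define p where "p = Re u"
  define m where "m = Im u"
  have "Re (u * cnj w) = 0" using D unfolding yu zw sc[OF oc] .
  then have pm: "p\<^sup>2 = m\<^sup>2" unfolding wu p_def m_def by (simp add: power2_eq_square)
  have "complex_of_real r * complex_of_real r + u * cnj u + w * cnj w = 1"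
    using A unfolding xr yu zw sc[OF oc] by simp
  then have "r\<^sup>2 + 2 * (p\<^sup>2 + m\<^sup>2) = 1" unfolding wu p_def m_def
    by (simp add: complex_eq_iff power2_eq_square)
  then have "r\<^sup>2 + (2 * p)\<^sup>2 = 1" using pm by (simp add: power2_eq_square)
  then obtain \<phi> where cs: "r = cos \<phi>" "2 * p = sin \<phi>" using sincos_total_2pi by metis
  have u_eq: "u = complex_of_real p + \<i> * complex_of_real m"
    by (simp add: p_def m_def complex_eq_iff)
  from pm have "m = p \<or> m = - p" by (metis power2_eq_iff)
  then show ?thesis
  proof
    assume mp: "m = p"
    show ?thesis
    proof (intro exI conjI)
      show "cmod \<omega> = 1" by (rule om)
      show "x = \<omega> * complex_of_real (cos \<phi>)" using xr cs by simp
      show "y = \<omega> * ((1 + \<i> * (-1) powi (0::int)) / 2 * complex_of_real (sin \<phi>))"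
        unfolding yu u_eq mp cs(2)[symmetric] by (simp add: algebra_simps)
      show "z = \<omega> * (- ((1 - \<i> * (-1) powi (0::int)) / 2) * complex_of_real (sin \<phi>))"
        unfolding zw wu u_eq mp cs(2)[symmetric] by (simp add: field_simps) (simp add: algebra_simps)?
    qed
  next
    assume mp: "m = - p"
    show ?thesis
    proof (intro exI conjI)
      show "cmod \<omega> = 1" by (rule om)
      show "x = \<omega> * complex_of_real (cos \<phi>)" using xr cs by simp
      show "y = \<omega> * ((1 + \<i> * (-1) powi (1::int)) / 2 * complex_of_real (sin \<phi>))"
        unfolding yu u_eq mp cs(2)[symmetric] by (simp add: algebra_simps)
      show "z = \<omega> * (- ((1 - \<i> * (-1) powi (1::int)) / 2) * complex_of_real (sin \<phi>))"
        unfolding zw wu u_eq mp cs(2)[symmetric] by (simp add: algebra_simps)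
    qed
  qed
qed


lemma cond_param:
  fixes c :: "gen \<Rightarrow> complex"
  assumes nz: "\<forall>d. c d \<noteq> 0"
  shows "(c GX * cnj (c GX) + c GY * cnj (c GY) + c GZ * cnj (c GZ) = 1 \<and>
          c GX * cnj (c GY) + c GZ * cnj (c GX) = 0 \<and> Re (c GY * cnj (c GZ)) = 0) \<longleftrightarrow>
         (\<exists>\<omega> (\<phi>::real) (q::int). cmod \<omega> = 1 \<and>
                c GX = \<omega> * complex_of_real (cos \<phi>) \<and>
                c GY = \<omega> * ((1 + \<i> * (-1) powi q) / 2 * complex_of_real (sin \<phi>)) \<and>
                c GZ = \<omega> * (- ((1 - \<i> * (-1) powi q) / 2) * complex_of_real (sin \<phi>)))"
proof
  assume h: "c GX * cnj (c GX) + c GY * cnj (c GY) + c GZ * cnj (c GZ) = 1 \<and>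
          c GX * cnj (c GY) + c GZ * cnj (c GX) = 0 \<and> Re (c GY * cnj (c GZ)) = 0"
  show "\<exists>\<omega> (\<phi>::real) (q::int). cmod \<omega> = 1 \<and>
                c GX = \<omega> * complex_of_real (cos \<phi>) \<and>
                c GY = \<omega> * ((1 + \<i> * (-1) powi q) / 2 * complex_of_real (sin \<phi>)) \<and>
                c GZ = \<omega> * (- ((1 - \<i> * (-1) powi q) / 2) * complex_of_real (sin \<phi>))"
    using param_fwd[of "c GX" "c GY" "c GZ"] h nz by blast
next
  assume "\<exists>\<omega> (\<phi>::real) (q::int). cmod \<omega> = 1 \<and>
                c GX = \<omega> * complex_of_real (cos \<phi>) \<and>
                c GY = \<omega> * ((1 + \<i> * (-1) powi q) / 2 * complex_of_real (sin \<phi>)) \<and>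
                c GZ = \<omega> * (- ((1 - \<i> * (-1) powi q) / 2) * complex_of_real (sin \<phi>))"
  then obtain \<omega> \<phi> and q :: int where om: "cmod \<omega> = 1"
    and e: "c GX = \<omega> * complex_of_real (cos \<phi>)"
      "c GY = \<omega> * ((1 + \<i> * (-1) powi q) / 2 * complex_of_real (sin \<phi>))"
      "c GZ = \<omega> * (- ((1 - \<i> * (-1) powi q) / 2) * complex_of_real (sin \<phi>))" by blast
  have oc: "\<omega> * cnj \<omega> = 1" using complex_norm_square[of \<omega>] om by simp
  show "c GX * cnj (c GX) + c GY * cnj (c GY) + c GZ * cnj (c GZ) = 1 \<and>
          c GX * cnj (c GY) + c GZ * cnj (c GX) = 0 \<and> Re (c GY * cnj (c GZ)) = 0"
    unfolding e sc[OF oc] by (rule param_back[OF pm1])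
qed

theorem mainTheorem5:
  fixes G :: "('a, 'b) monoid_scheme" and v :: "gen \<Rightarrow> 'a"
  assumes "presents G v"
  shows "(\<forall>c. homog_scalar_qw G v c \<longleftrightarrow>
            ((\<forall>d. c d \<noteq> 0) \<and>
             (\<exists>\<omega> (\<phi>::real) (q::int). cmod \<omega> = 1 \<and>
                c GX = \<omega> * complex_of_real (cos \<phi>) \<and>
                c GY = \<omega> * ((1 + \<i> * (-1) powi q) / 2 * complex_of_real (sin \<phi>)) \<and>
                c GZ = \<omega> * (- ((1 - \<i> * (-1) powi q) / 2) * complex_of_real (sin \<phi>)))))
         \<and> (\<exists>c. homog_scalar_qw G v c)"
proof -
  have grp: "group G" using assms unfolding presents_def by blast
  interpret P: pres G v by (rule pres.intro[OF grp], rule pres_axioms.intro[OF assms])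
  have iff: "homog_scalar_qw G v c \<longleftrightarrow>
            ((\<forall>d. c d \<noteq> 0) \<and>
             (\<exists>\<omega> (\<phi>::real) (q::int). cmod \<omega> = 1 \<and>
                c GX = \<omega> * complex_of_real (cos \<phi>) \<and>
                c GY = \<omega> * ((1 + \<i> * (-1) powi q) / 2 * complex_of_real (sin \<phi>)) \<and>
                c GZ = \<omega> * (- ((1 - \<i> * (-1) powi q) / 2) * complex_of_real (sin \<phi>))))" for c
    unfolding P.homog_iff P.cA_def P.cB_def using cond_param by blast
  define c0 :: "gen \<Rightarrow> complex" where "c0 = (\<lambda>d. case d of
      GX \<Rightarrow> 1 * complex_of_real (cos (pi/4))
    | GY \<Rightarrow> 1 * ((1 + \<i> * (-1) powi (0::int)) / 2 * complex_of_real (sin (pi/4)))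
    | GZ \<Rightarrow> 1 * (- ((1 - \<i> * (-1) powi (0::int)) / 2) * complex_of_real (sin (pi/4))))"
  have nz: "\<forall>d. c0 d \<noteq> 0"
  proof
    fix d show "c0 d \<noteq> 0"
      by (cases d) (simp_all add: c0_def cos_45 sin_45 complex_eq_iff)
  qed
  have "homog_scalar_qw G v c0"
    unfolding iff
    by (intro conjI nz exI[of _ 1] exI[of _ "pi/4"] exI[of _ "0::int"]) (simp_all add: c0_def)
  then show ?thesis using iff by blast
qed

end
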